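(* Let $\omega$ be a Schwarz-type function, $F=\ell\circ\omega$, and let $\varphi(z)=\lambda z$ with $|\lambda|=1$, and suppose $T_{F,\varphi}(f)\in\mathcal{P}$ for every $f\in\mathcal{P}$. Then the set of fixed points of $T_{F,\varphi}$ in $\mathcal{P}$ is: (a) all of $\mathcal{P}$ if $\lambda=1$; (b) the set of functions $f(z)=g(z^n)$ with $g\in\mathcal{P}$, if $\lambda^n=1$ with $n>1$ the smallest positive integer such that $\lambda^n=1$; (c) only the constant function $1$, if $\lambda^n\ne1$ for all positive integers $n$.
   Context: $\mathbb{D}$ is the open unit disk. $\mathcal{P}$ is the set of analytic $f$ on $\mathbb{D}$ with $\mathrm{Re}\,f>0$ and $f(0)=1$. A Schwarz-type function is an analytic $\omega:\mathbb{D}\to\mathbb{D}$ with $\omega(0)=0$. $\ell(z)=\frac{1+z}{1-z}$. $T_{F,\varphi}(f)=F\cdot(f\circ\varphi)$. *)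

theory Defs
  imports "HOL-Complex_Analysis.Complex_Analysis"
begin

definition unit_disk :: "complex set" where
  "unit_disk = ball 0 1"

definition carP :: "(complex \<Rightarrow> complex) set" where
  "carP = {f. f holomorphic_on unit_disk \<and> (\<forall>z\<in>unit_disk. Re (f z) > 0) \<and> f 0 = 1}"

definition schwarz_type :: "(complex \<Rightarrow> complex) \<Rightarrow> bool" where
  "schwarz_type w \<longleftrightarrow> w holomorphic_on unit_disk \<and> w ` unit_disk \<subseteq> unit_disk \<and> w 0 = 0"

definition ell :: "complex \<Rightarrow> complex" where
  "ell z = (1 + z) / (1 - z)"

definition wco :: "(complex \<Rightarrow> complex) \<Rightarrow> (complex \<Rightarrow> complex) \<Rightarrow> (complex \<Rightarrow> complex) \<Rightarrow> (complex \<Rightarrow> complex)" where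
  "wco F \<phi> f = (\<lambda>z. F z * f (\<phi> z))"

definition fixed_points_P :: "(complex \<Rightarrow> complex) \<Rightarrow> (complex \<Rightarrow> complex) \<Rightarrow> (complex \<Rightarrow> complex) set" where
  "fixed_points_P F \<phi> = {f \<in> carP. \<forall>z\<in>unit_disk. wco F \<phi> f z = f z}"

end

theory Submission
  imports Defs
begin

lemma ell_Re_pos: "cmod u < 1 \<Longrightarrow> Re (ell u) > 0"
proof -
  assume u: "cmod u < 1"
  have ne: "1 - u \<noteq> 0" using u by auto
  have "Re (ell u) = ((1 + Re u) * (1 - Re u) + Im u * (- Im u)) / ((1 - Re u)^2 + (Im u)^2)"
    unfolding ell_def Re_divide by simp
  also have "\<dots> = (1 - (Re u)^2 - (Im u)^2) / ((1 - Re u)^2 + (Im u)^2)"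
    by (simp add: algebra_simps power2_eq_square)
  finally have e: "Re (ell u) = (1 - (Re u)^2 - (Im u)^2) / ((1 - Re u)^2 + (Im u)^2)" .
  moreover have "(Re u)^2 + (Im u)^2 < 1" using u
  proof -
    have "(cmod u)^2 < 1^2" using u by (intro power_strict_mono) auto
    then show ?thesis by (simp add: cmod_power2)
  qed
  moreover have "(1 - Re u)^2 + (Im u)^2 > 0" using ne
  proof -
    have "1 - Re u \<noteq> 0 \<or> Im u \<noteq> 0" using ne by (auto simp: complex_eq_iff)
    then show ?thesis by (simp add: sum_power2_gt_zero_iff)
  qed
  ultimately show ?thesis using e by (simp add: divide_pos_pos)
qed

lemma ell_test_in_P: assumes "cmod c \<le> 1" shows "(\<lambda>z. ell (c * z)) \<in> carP"
proof -
  have lt: "cmod (c*z) < 1" if "z \<in> unit_disk" for z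
  proof -
    have "cmod c * cmod z \<le> 1 * cmod z" using assms by (intro mult_right_mono) auto
    then show ?thesis using that unfolding unit_disk_def by (simp add: norm_mult)
  qed
  have "(\<lambda>z. ell (c * z)) holomorphic_on unit_disk"
    unfolding ell_def
    by (intro holomorphic_intros) (use lt in force)
  moreover have "\<forall>z\<in>unit_disk. Re (ell (c*z)) > 0" using lt ell_Re_pos by blast
  ultimately show ?thesis unfolding carP_def by (simp add: ell_def)
qed

lemma div_cancel_common: "c \<noteq> 0 \<Longrightarrow> (a/c)/(b/c) = (a::complex)/b"
  by (cases "b = 0") (simp_all add: divide_simps)

lemma ell_tan: assumes "\<bar>b\<bar> < pi/2" shows "ell (\<i> * of_real (tan (b/2))) = cis b"
proof -
  define h where "h = b/2"
  have c: "cos h > 0" using assms unfolding h_def by (intro cos_gt_zero_pi) auto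
  have e1: "1 + \<i> * of_real (tan h) = cis h / of_real (cos h)"
    using c by (simp add: complex_eq_iff tan_def cis.sel)
  have e2: "1 - \<i> * of_real (tan h) = cis (-h) / of_real (cos h)"
    using c by (simp add: complex_eq_iff tan_def cis.sel)
  have "ell (\<i> * of_real (tan h)) = cis h / cis (-h)"
    unfolding ell_def e1 e2 using c by (intro div_cancel_common) simp
  also have "\<dots> = cis b" by (simp add: cis_divide h_def)
  finally show ?thesis by (simp add: h_def)
qed

lemma cos_le_zero': assumes "pi/2 \<le> x" "x \<le> pi" shows "cos x \<le> 0"
proof -
  have "cos x = - sin (x - pi/2)" by (simp add: sin_diff)
  moreover have "0 \<le> sin (x - pi/2)" using assms by (intro sin_ge_zero) auto
  ultimately show ?thesis by simp
qed

lemma tan_half_lt1: assumes "0 \<le> b" "b < pi/2" shows "0 \<le> tan (b/2)" "tan (b/2) < 1"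
proof -
  show "0 \<le> tan (b/2)" using assms by (intro tan_pos_pi2_le) auto
  have "tan (b/2) < tan (pi/4)" using assms by (intro tan_monotone) auto
  then show "tan (b/2) < 1" by (simp add: tan_45)
qed

lemma arg_bound:
  assumes "Re a > 0" "0 \<le> b" "b < pi/2" "Re (a * cis b) > 0" "Re (a * cis (-b)) > 0"
  shows "\<bar>Im (Ln a)\<bar> \<le> pi/2 - b"
proof -
  have a0: "a \<noteq> 0" using assms by auto
  define t where "t = Im (Ln a)"
  have t: "\<bar>t\<bar> < pi/2" using Re_Ln_pos_lt_imp assms(1) t_def by blast
  have "a * cis b = exp (Ln a + \<i> * of_real b)" using a0 by (simp add: exp_add cis_conv_exp)
  then have "Re (a * cis b) = exp (Re (Ln a)) * cos (t + b)" by (simp add: Re_exp t_def)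
  then have p1: "cos (t + b) > 0" using assms(4) by (simp add: zero_less_mult_iff)
  have "a * cis (-b) = exp (Ln a + \<i> * of_real (-b))" using a0 by (simp add: exp_add cis_conv_exp exp_diff exp_minus divide_inverse)
  then have "Re (a * cis (-b)) = exp (Re (Ln a)) * cos (t - b)" by (simp add: Re_exp t_def)
  then have p2: "cos (t - b) > 0" using assms(5) by (simp add: zero_less_mult_iff)
  have "t + b < pi/2"
  proof (rule ccontr)
    assume "\<not> t + b < pi/2"
    then have "cos (t+b) \<le> 0" using t assms by (intro cos_le_zero') auto
    then show False using p1 by simp
  qed
  moreover have "t - b > -pi/2"
  proof (rule ccontr)
    assume "\<not> t - b > -pi/2"
    then have "cos (b - t) \<le> 0" using t assms by (intro cos_le_zero') auto
    moreover have "cos (t - b) = cos (b - t)" by (metis cos_minus minus_diff_eq)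
    ultimately show False using p2 by simp
  qed
  ultimately show ?thesis unfolding t_def by linarith
qed


lemma disk_lam: "cmod lam = 1 \<Longrightarrow> z \<in> unit_disk \<Longrightarrow> lam * z \<in> unit_disk"
  by (simp add: unit_disk_def norm_mult)

lemma F_hol: assumes "schwarz_type w" shows "(\<lambda>z. ell (w z)) holomorphic_on unit_disk"
proof -
  have "w z \<noteq> 1" if "z \<in> unit_disk" for z
    using assms that unfolding schwarz_type_def unit_disk_def by fastforce
  then show ?thesis unfolding ell_def using assms unfolding schwarz_type_def
    by (intro holomorphic_intros) auto
qed

lemma F_Re: assumes "schwarz_type w" "z \<in> unit_disk" shows "Re (ell (w z)) > 0"
  using assms ell_Re_pos unfolding schwarz_type_def unit_disk_def by fastforce

context
  fixes w :: "complex \<Rightarrow> complex" and lam :: complex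
  assumes sw: "schwarz_type w" and lam1: "cmod lam = 1"
    and hyp: "\<forall>f\<in>carP. wco (ell \<circ> w) (\<lambda>z. lam * z) f \<in> carP"
begin

lemma B1: assumes z: "z \<in> unit_disk" and u: "cmod u \<le> cmod z"
  shows "Re (ell (w z) * ell u) > 0"
proof -
  define c where "c = (if z = 0 then 0 else u / (lam * z))"
  have lam0: "lam \<noteq> 0" using lam1 by auto
  have "cmod c \<le> 1" using u lam1 unfolding c_def by (auto simp: norm_divide norm_mult divide_le_eq)
  then have "(\<lambda>z. ell (c * z)) \<in> carP" by (rule ell_test_in_P)
  then have "wco (ell \<circ> w) (\<lambda>z. lam * z) (\<lambda>z. ell (c * z)) \<in> carP" using hyp by blast
  then have "Re (ell (w z) * ell (c * (lam * z))) > 0" using z unfolding carP_def wco_def by auto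
  moreover have "c * (lam * z) = u" using u lam0 unfolding c_def by auto
  ultimately show ?thesis by simp
qed

lemma B2: assumes z: "z \<in> unit_disk" and b: "0 \<le> b" "b < pi/2" and t: "tan (b/2) \<le> cmod z"
  shows "\<bar>Im (Ln (ell (w z)))\<bar> \<le> pi/2 - b"
proof (rule arg_bound[OF F_Re[OF sw z] b])
  have t0: "0 \<le> tan (b/2)" using tan_half_lt1 b by auto
  have "Re (ell (w z) * ell (\<i> * of_real (tan (b/2)))) > 0"
    using t t0 by (intro B1 z) (simp add: norm_mult)
  then show "Re (ell (w z) * cis b) > 0" using b by (simp add: ell_tan)
  have "Re (ell (w z) * ell (\<i> * of_real (tan (-b/2)))) > 0"
    using t t0 by (intro B1 z) (simp add: norm_mult)
  moreover have "ell (\<i> * of_real (tan (-b/2))) = cis (-b)" using b ell_tan[of "-b"] by simp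
  ultimately show "Re (ell (w z) * cis (-b)) > 0" by simp
qed

lemma G_hol: "(\<lambda>z. Ln (ell (w z))) holomorphic_on unit_disk"
  using F_Re[OF sw] by (intro holomorphic_on_Ln' F_hol sw) (force simp: complex_nonpos_Reals_iff)

lemma B4: assumes z0: "z0 \<in> unit_disk" and b: "0 \<le> b" "b < pi/2" and s: "s = 1 \<or> s = -1"
  shows "s * Im (Ln (ell (w z0))) \<le> pi/2 - b"
proof -
  define \<rho> where "\<rho> = max (max (cmod z0) (tan (b/2))) (1/2)"
  have r1: "\<rho> < 1" using z0 tan_half_lt1[OF b] unfolding \<rho>_def unit_disk_def by auto
  have sub: "cball 0 \<rho> \<subseteq> unit_disk" using r1 unfolding unit_disk_def by auto
  define h where "h = (\<lambda>z. exp (- (of_real s * \<i>) * Ln (ell (w z))))"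
  have hh: "h holomorphic_on unit_disk" unfolding h_def by (intro holomorphic_intros G_hol)
  have nh: "norm (h z) = exp (s * Im (Ln (ell (w z))))" for z
    unfolding h_def by (simp add: norm_exp_eq_Re)
  have "norm (h z0) \<le> exp (pi/2 - b)"
  proof (rule maximum_modulus_frontier[where S = "cball 0 \<rho>" and f = h and \<xi> = z0])
    show "h holomorphic_on interior (cball 0 \<rho>)"
    proof -
      have "ball 0 \<rho> \<subseteq> unit_disk" using sub ball_subset_cball by blast
      then show ?thesis using holomorphic_on_subset[OF hh] by simp
    qed
    show "continuous_on (closure (cball 0 \<rho>)) h"
      using hh sub by (auto intro: holomorphic_on_imp_continuous_on holomorphic_on_subset)
    show "bounded (cball 0 \<rho>)" by simp
    show "z0 \<in> cball 0 \<rho>" unfolding \<rho>_def by auto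
    fix z :: complex assume "z \<in> frontier (cball 0 \<rho>)"
    then have zr: "cmod z = \<rho>" by simp
    then have zd: "z \<in> unit_disk" using r1 unfolding unit_disk_def by simp
    have "tan (b/2) \<le> cmod z" using zr unfolding \<rho>_def by auto
    then have "\<bar>Im (Ln (ell (w z)))\<bar> \<le> pi/2 - b" using B2[OF zd b] by blast
    then have "s * Im (Ln (ell (w z))) \<le> pi/2 - b" using s by auto
    then show "norm (h z) \<le> exp (pi/2 - b)" unfolding nh by simp
  qed
  then show ?thesis unfolding nh by simp
qed

lemma B5: assumes z0: "z0 \<in> unit_disk" shows "Im (Ln (ell (w z0))) = 0"
proof (rule ccontr)
  define c where "c = \<bar>Im (Ln (ell (w z0)))\<bar>"
  assume "Im (Ln (ell (w z0))) \<noteq> 0"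
  then have c0: "c > 0" unfolding c_def by auto
  define b where "b = pi/2 - min c (pi/2) / 2"
  have b: "0 \<le> b" "b < pi/2" using c0 unfolding b_def by (auto simp: min_def)
  have "c \<le> pi/2 - b" unfolding c_def
    using B4[OF z0 b, of 1] B4[OF z0 b, of "-1"] by (auto simp: abs_if)
  then show False using c0 unfolding b_def by (auto simp: min_def split: if_splits)
qed

lemma F_one: assumes z: "z \<in> unit_disk" shows "ell (w z) = 1"
proof -
  have Im0: "Im (ell (w z)) = 0" if "z \<in> unit_disk" for z
  proof -
    have "ell (w z) \<noteq> 0" using F_Re[OF sw that] by auto
    then show ?thesis using Im_Ln_eq_0[of "ell (w z)"] B5[OF that] by simp
  qed
  have w0: "w 0 = 0" using sw unfolding schwarz_type_def by auto
  have d0: "0 \<in> unit_disk" unfolding unit_disk_def by simp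
  have "(\<lambda>z. ell (w z)) constant_on unit_disk"
  proof (rule ccontr)
    assume nc: "\<not> (\<lambda>z. ell (w z)) constant_on unit_disk"
    have "open ((\<lambda>z. ell (w z)) ` unit_disk)"
      by (rule open_mapping_thm[OF F_hol[OF sw] _ _ _ subset_refl nc]) (auto simp: unit_disk_def)
    moreover have "1 \<in> (\<lambda>z. ell (w z)) ` unit_disk"
      using d0 w0 by (force simp: ell_def)
    ultimately obtain e where e: "e > 0" "ball 1 e \<subseteq> (\<lambda>z. ell (w z)) ` unit_disk"
      using open_contains_ball by blast
    have "1 + \<i> * of_real (e/2) \<in> ball 1 e" using e by (simp add: dist_norm norm_mult)
    then have "1 + \<i> * of_real (e/2) \<in> (\<lambda>z. ell (w z)) ` unit_disk" by (rule subsetD[OF e(2)])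
    then obtain y where y: "y \<in> unit_disk" "ell (w y) = 1 + \<i> * of_real (e/2)" by (auto simp del: of_real_divide)
    have "Im (ell (w y)) = e/2" using y(2) by simp
    then show False using Im0[OF y(1)] e by simp
  qed
  then obtain c where c: "\<forall>z\<in>unit_disk. ell (w z) = c" unfolding constant_on_def by blast
  then have "c = 1" using d0 w0 by (force simp: ell_def)
  then show ?thesis using c z by blast
qed

end

definition coef :: "(complex \<Rightarrow> complex) \<Rightarrow> nat \<Rightarrow> complex" where
  "coef f k = (deriv ^^ k) f 0 / fact k"

lemma open_disk: "open unit_disk" and zero_disk: "0 \<in> unit_disk"
  by (auto simp: unit_disk_def)

lemma coef_sums: assumes "f \<in> carP" "z \<in> unit_disk"
  shows "(\<lambda>k. coef f k * z ^ k) sums f z"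
  using holomorphic_power_series[of f 0 1 z] assms
  unfolding carP_def unit_disk_def coef_def by simp

lemma coef_inv: assumes f: "f \<in> carP" and lam1: "cmod lam = 1"
  and inv: "\<forall>z\<in>unit_disk. f (lam * z) = f z"
  shows "coef f k * lam ^ k = coef f k"
proof -
  have hol: "f holomorphic_on unit_disk" using f unfolding carP_def by auto
  have "(deriv ^^ k) (\<lambda>w. f (lam * w)) 0 = lam ^ k * (deriv ^^ k) f (lam * 0)"
    by (rule higher_deriv_compose_linear[OF hol open_disk open_disk zero_disk])
       (use lam1 disk_lam in auto)
  moreover have "(deriv ^^ k) (\<lambda>w. f (lam * w)) 0 = (deriv ^^ k) f 0"
  proof (rule higher_deriv_cong_ev)
    show "\<forall>\<^sub>F x in nhds 0. f (lam * x) = f x"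
      using eventually_nhds_in_open[OF open_disk zero_disk] inv
      by (auto elim!: eventually_mono)
  qed simp
  ultimately show ?thesis unfolding coef_def by (simp add: mult.commute)
qed

lemma coef_zero: "coef f k * lam ^ k = coef f k \<Longrightarrow> lam ^ k \<noteq> 1 \<Longrightarrow> coef f k = 0"
  by (metis mult_cancel_left2)

lemma nth_root_disk: assumes "w \<in> unit_disk" "n > 0" shows "\<exists>z\<in>unit_disk. z ^ n = w"
proof (cases "w = 0")
  case True then show ?thesis using assms zero_disk by (intro bexI[of _ 0]) auto
next
  case False
  define z where "z = exp (Ln w / of_nat n)"
  have "z ^ n = exp (of_nat n * (Ln w / of_nat n))" unfolding z_def exp_of_nat_mult ..
  also have "\<dots> = w" using assms False by simp
  finally have zn: "z ^ n = w" .
  have "cmod z ^ n = cmod w" using zn by (metis norm_power)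
  then have "cmod z ^ n < 1 ^ n" using assms unfolding unit_disk_def by simp
  then have "cmod z < 1" by (rule power_less_imp_less_base) simp
  then show ?thesis using zn unfolding unit_disk_def by auto
qed

lemma const_case:
  assumes f: "f \<in> carP" and lam1: "cmod lam = 1"
  and inv: "\<forall>z\<in>unit_disk. f (lam * z) = f z"
  and nr: "\<forall>n::nat. n > 0 \<longrightarrow> lam ^ n \<noteq> 1"
  and z: "z \<in> unit_disk"
  shows "f z = 1"
proof -
  have c: "coef f k = 0" if "k > 0" for k
    using coef_zero[OF coef_inv[OF f lam1 inv]] nr that by blast
  have c0: "coef f 0 = 1" using f unfolding coef_def carP_def by simp
  have "(\<lambda>k. coef f k * z ^ k) = (\<lambda>k. if k = 0 then (\<lambda>_. 1) k else 0)"
    using c c0 by (auto intro!: ext)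
  then have "(\<lambda>k. coef f k * z ^ k) sums 1" using sums_single[of 0 "\<lambda>_. (1::complex)"] by simp
  then show ?thesis using coef_sums[OF f z] sums_unique2 by blast
qed

lemma root_case:
  assumes f: "f \<in> carP" and lam1: "cmod lam = 1"
  and inv: "\<forall>z\<in>unit_disk. f (lam * z) = f z"
  and n: "n > 1" "lam ^ n = 1" "\<forall>m::nat. 0 < m \<and> m < n \<longrightarrow> lam ^ m \<noteq> 1"
  shows "\<exists>g\<in>carP. \<forall>z\<in>unit_disk. f z = g (z ^ n)"
proof -
  have c: "coef f k = 0" if "\<not> n dvd k" for k
  proof -
    have "lam ^ k = (lam ^ n) ^ (k div n) * lam ^ (k mod n)"
      by (simp add: power_mult[symmetric] power_add[symmetric])
    also have "\<dots> = lam ^ (k mod n)" using n(2) by simp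
    finally have "lam ^ k \<noteq> 1" using n that
      by (metis mod_less_divisor mod_0_imp_dvd neq0_conv order_less_trans zero_less_one)
    then show ?thesis using coef_zero[OF coef_inv[OF f lam1 inv]] by blast
  qed
  have sm: "strict_mono (\<lambda>k. n * k)" using n unfolding strict_mono_def by simp
  have S1: "(\<lambda>k. coef f (n*k) * (z ^ n) ^ k) sums f z" if z: "z \<in> unit_disk" for z
  proof -
    have "(\<lambda>k. (\<lambda>j. coef f j * z ^ j) (n * k)) sums f z"
    proof (subst sums_mono_reindex[OF sm])
      show "(\<lambda>k. coef f k * z ^ k) sums f z" by (rule coef_sums[OF f z])
      fix k assume "k \<notin> range (\<lambda>k. n * k)"
      then have "\<not> n dvd k" by auto
      then show "coef f k * z ^ k = 0" using c by simp
    qed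
    then show ?thesis by (simp add: power_mult)
  qed
  define g where "g w = (\<Sum>k. coef f (n*k) * w ^ k)" for w
  have S3: "(\<lambda>k. coef f (n*k) * w ^ k) sums g w \<and> (\<exists>z\<in>unit_disk. z ^ n = w \<and> g w = f z)"
    if w: "w \<in> unit_disk" for w
  proof -
    obtain z where z: "z \<in> unit_disk" "z ^ n = w" using nth_root_disk[OF w, of n] n(1) by auto
    have s: "(\<lambda>k. coef f (n*k) * w ^ k) sums f z" using S1[OF z(1)] z(2) by simp
    then have "g w = f z" unfolding g_def using sums_unique by metis
    then show ?thesis using s z by auto
  qed
  have gh: "g holomorphic_on unit_disk"
    unfolding unit_disk_def
    by (rule power_series_holomorphic[where a = "\<lambda>k. coef f (n*k)"]) (use S3 in \<open>auto simp: unit_disk_def\<close>)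
  have gRe: "Re (g w) > 0" if "w \<in> unit_disk" for w
    using S3[OF that] f unfolding carP_def by auto
  have g0: "g 0 = 1"
  proof -
    obtain z where "z \<in> unit_disk" "z ^ n = 0" "g 0 = f z" using S3[OF zero_disk] by auto
    then show ?thesis using f n unfolding carP_def by simp
  qed
  have "g \<in> carP" using gh gRe g0 unfolding carP_def by auto
  moreover have "\<forall>z\<in>unit_disk. f z = g (z ^ n)"
  proof
    fix z assume z: "z \<in> unit_disk"
    have "z ^ n \<in> unit_disk" using z n unfolding unit_disk_def
      by (simp add: norm_power power_less_one_iff)
    then have "(\<lambda>k. coef f (n*k) * (z^n) ^ k) sums g (z ^ n)" using S3 by blast
    then show "f z = g (z ^ n)" using S1[OF z] sums_unique2 by blast
  qed
  ultimately show ?thesis by blast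
qed


theorem proposition4p2:
  fixes w :: "complex \<Rightarrow> complex" and lam :: complex
  assumes "schwarz_type w"
    and "cmod lam = 1"
    and "\<forall>f\<in>carP. wco (ell \<circ> w) (\<lambda>z. lam * z) f \<in> carP"
  shows "(lam = 1 \<longrightarrow> fixed_points_P (ell \<circ> w) (\<lambda>z. lam * z) = carP)
    \<and> (\<forall>n::nat. n > 1 \<and> lam ^ n = 1 \<and> (\<forall>m::nat. 0 < m \<and> m < n \<longrightarrow> lam ^ m \<noteq> 1) \<longrightarrow>
         fixed_points_P (ell \<circ> w) (\<lambda>z. lam * z) =
           {f \<in> carP. \<exists>g\<in>carP. \<forall>z\<in>unit_disk. f z = g (z ^ n)})
    \<and> ((\<forall>n::nat. n > 0 \<longrightarrow> lam ^ n \<noteq> 1) \<longrightarrow>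
         fixed_points_P (ell \<circ> w) (\<lambda>z. lam * z) = {f \<in> carP. \<forall>z\<in>unit_disk. f z = 1})"
proof -
  have F1: "\<And>z. z \<in> unit_disk \<Longrightarrow> ell (w z) = 1" using F_one[OF assms] by blast
  have FP: "fixed_points_P (ell \<circ> w) (\<lambda>z. lam * z) = {f\<in>carP. \<forall>z\<in>unit_disk. f (lam * z) = f z}"
    unfolding fixed_points_P_def wco_def using F1 by auto
  have a: "lam = 1 \<longrightarrow> fixed_points_P (ell \<circ> w) (\<lambda>z. lam * z) = carP"
    unfolding FP by auto
  have b: "fixed_points_P (ell \<circ> w) (\<lambda>z. lam * z) =
           {f \<in> carP. \<exists>g\<in>carP. \<forall>z\<in>unit_disk. f z = g (z ^ n)}"
    if n: "n > 1" "lam ^ n = 1" "\<forall>m::nat. 0 < m \<and> m < n \<longrightarrow> lam ^ m \<noteq> 1" for n :: nat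
  proof
    show "fixed_points_P (ell \<circ> w) (\<lambda>z. lam * z) \<subseteq> {f \<in> carP. \<exists>g\<in>carP. \<forall>z\<in>unit_disk. f z = g (z ^ n)}"
      unfolding FP using root_case[OF _ assms(2) _ n] by blast
    show "{f \<in> carP. \<exists>g\<in>carP. \<forall>z\<in>unit_disk. f z = g (z ^ n)} \<subseteq> fixed_points_P (ell \<circ> w) (\<lambda>z. lam * z)"
    proof
      fix f assume "f \<in> {f \<in> carP. \<exists>g\<in>carP. \<forall>z\<in>unit_disk. f z = g (z ^ n)}"
      then obtain g where f: "f \<in> carP" and g: "\<forall>z\<in>unit_disk. f z = g (z ^ n)" by auto
      have "f (lam * z) = f z" if z: "z \<in> unit_disk" for z
      proof -
        have "f (lam * z) = g ((lam * z) ^ n)" using g disk_lam[OF assms(2) z] by blast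
        also have "\<dots> = g (z ^ n)" using n(2) by (simp add: power_mult_distrib)
        also have "\<dots> = f z" using g z by simp
        finally show ?thesis .
      qed
      then show "f \<in> fixed_points_P (ell \<circ> w) (\<lambda>z. lam * z)" unfolding FP using f by blast
    qed
  qed
  have c: "fixed_points_P (ell \<circ> w) (\<lambda>z. lam * z) = {f \<in> carP. \<forall>z\<in>unit_disk. f z = 1}"
    if nr: "\<forall>n::nat. n > 0 \<longrightarrow> lam ^ n \<noteq> 1"
  proof
    show "fixed_points_P (ell \<circ> w) (\<lambda>z. lam * z) \<subseteq> {f \<in> carP. \<forall>z\<in>unit_disk. f z = 1}"
      unfolding FP using const_case[OF _ assms(2) _ nr] by blast
    show "{f \<in> carP. \<forall>z\<in>unit_disk. f z = 1} \<subseteq> fixed_points_P (ell \<circ> w) (\<lambda>z. lam * z)"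
      unfolding FP using disk_lam[OF assms(2)] by auto
  qed
  show ?thesis using a b c by blast
qed

end
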